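(* Let $F$ be a continuous distribution function on $[0,\infty)$ with density $f$ whose support is $[0,\infty)$, where $f$ is bounded in a neighbourhood of $0$, differentiable on $(0,\infty)$, and satisfies $$f'\big(F^{-1}(x)\big) \le -\frac{f\big(F^{-1}(x)\big)}{1+F^{-1}(x)} \quad \text{for all } x\in(0,1).$$ Fix $\lambda' \in (0,2]$ and $c \ge 0$. For $q \in [\max(0,\lambda'-1), \lambda'/2]$ let $\tau_b(q) = F^{-1}(1-q)$ and $\tau_a(q) = F^{-1}(1-(\lambda'-q))$ (so $\tau_a(q)\le\tau_b(q)$, user $b$ has feedback probability $q$ and user $a$ has feedback probability $\lambda'-q$, with the convention $F^{-1}(1)=+\infty$), let $Y_a, Y_b$ be independent with distribution function $F$, $\bar Y_a = Y_a\mathbf 1\{Y_a\ge \tau_a(q)\}$, $\bar Y_b = Y_b\mathbf 1\{Y_b\ge\tau_b(q)\}$, and $$\Psi(q\mid c) = \mathbb{E}\big[\log\big(1+\max\{\bar Y_a,\bar Y_b,c\}\big)\big].$$ Then $q \mapsto \Psi(q\mid c)$ is nondecreasing on $[\max(0,\lambda'-1), \lambda'/2]$.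
   Context: Setting: a downlink vector broadcast channel; $Y_a,Y_b$ model the beam-1 SINRs of two distinct users whose total feedback probability $\lambda'$ is held fixed while $q$ moves the two feedback probabilities toward each other ($q=\lambda'/2$ meaning equal probabilities, i.e. equal thresholds). The constant $c$ plays the role of the maximum truncated beam-1 SINR over all other users (independent of $Y_a,Y_b$), so $\Psi(q\mid c)$ is the conditional expected beam-1 rate. $F^{-1}$ is the inverse of $F$ on $[0,\infty)$ (well defined since $F$ is continuous and strictly increasing there). Logarithms are natural. *)

theory Defs
  imports "HOL-Probability.Probability"
begin

definition Finv :: "(real \<Rightarrow> real) \<Rightarrow> real \<Rightarrow> real" where
  "Finv F x = (THE y. 0 \<le> y \<and> F y = x)"

definition Finv_ext :: "(real \<Rightarrow> real) \<Rightarrow> real \<Rightarrow> ereal" where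
  "Finv_ext F x = (if 1 \<le> x then \<infinity> else ereal (Finv F x))"

definition trunc :: "ereal \<Rightarrow> real \<Rightarrow> real" where
  "trunc tau y = (if tau \<le> ereal y then y else 0)"

definition law :: "(real \<Rightarrow> real) \<Rightarrow> real measure" where
  "law f = density lborel (\<lambda>x. ennreal (f x))"

text \<open>The integrand is nonnegative,
  so the expectation is the (possibly infinite) nonnegative integral.\<close>
definition Psi :: "(real \<Rightarrow> real) \<Rightarrow> (real \<Rightarrow> real) \<Rightarrow> real \<Rightarrow> real \<Rightarrow> real \<Rightarrow> ennreal" where
  "Psi F f lam c q =
     (\<integral>\<^sup>+ p. ennreal (ln (1 + max (max (trunc (Finv_ext F (1 - (lam - q))) (fst p))
                                         (trunc (Finv_ext F (1 - q)) (snd p))) c))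
        \<partial>(law f \<Otimes>\<^sub>M law f))"

end

theory Submission
  imports Defs
begin


locale dens =
  fixes F f :: "real \<Rightarrow> real"
  assumes f_nonneg: "\<And>x. 0 \<le> f x"
    and f_neg: "\<And>x. x < 0 \<Longrightarrow> f x = 0"
    and F_density: "\<And>x. (f has_integral F x) {..x}"
    and F_cont: "continuous_on UNIV F"
    and F_lim: "(F \<longlongrightarrow> 1) at_top"
    and f_support: "closure {x. f x \<noteq> 0} = {0..}"
    and f_diff: "\<And>x. 0 < x \<Longrightarrow> f differentiable (at x)"
    and f_cond: "\<And>x. 0 < x \<Longrightarrow> x < 1 \<Longrightarrow>
                   deriv f (Finv F x) \<le> - f (Finv F x) / (1 + Finv F x)"
begin

lemma f_isCont: "0 < x \<Longrightarrow> isCont f x"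
  using f_diff differentiable_imp_continuous_within by blast

lemma f_isCont_neg: "x < 0 \<Longrightarrow> isCont f x"
proof -
  assume "x<0"
  have "\<forall>\<^sub>F y in nhds x. f y = 0"
    using eventually_nhds_in_open[of "{..<0}" x] \<open>x<0\<close> f_neg by (auto elim!: eventually_mono)
  hence "isCont f x = isCont (\<lambda>_. 0::real) x" by (rule isCont_cong)
  thus ?thesis by simp
qed

lemma f_borel[measurable]: "f \<in> borel_measurable borel"
proof (rule borel_measurable_continuous_countable_exceptions[of "{0}"])
  show "continuous_on (- {0}) f"
  proof (intro continuous_at_imp_continuous_on ballI)
    fix x :: real assume "x \<in> - {0}"
    hence "x < 0 \<or> 0 < x" by auto
    thus "isCont f x" using f_isCont f_isCont_neg by blast
  qed
qed simp

lemma F_nonneg: "0 \<le> F x" using has_integral_nonneg[OF F_density] f_nonneg by auto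

lemma F_mono: "x \<le> y \<Longrightarrow> F x \<le> F y"
  by (rule has_integral_subset_le[OF _ F_density F_density]) (auto simp: f_nonneg)

lemma F_le1: "F x \<le> 1"
  using F_lim by (rule tendsto_lowerbound) (auto simp: eventually_at_top_linorder intro!: exI[of _ x] F_mono)

lemma F_nonpos: "x \<le> 0 \<Longrightarrow> F x = 0"
proof -
  assume "x \<le> 0"
  have z: "((\<lambda>_. 0::real) has_integral 0) {..x}" by (rule has_integral_0)
  have "(f has_integral 0) {..x}"
  proof (rule has_integral_spike[OF negligible_sing _ z])
    fix y assume "y \<in> {..x} - {0}"
    thus "f y = 0" using \<open>x\<le>0\<close> by (intro f_neg) auto
  qed
  thus ?thesis using F_density has_integral_unique by blast
qed

lemma F_density_lt: "(f has_integral F x) {..<x}"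
proof -
  have "(f has_integral F x) {..x} \<longleftrightarrow> (f has_integral F x) {..<x}"
    by (rule has_integral_spike_set_eq; rule negligible_subset[of "{x}"]) auto
  thus ?thesis using F_density by blast
qed

definition mu where "mu = law f"

lemma sets_mu[simp, measurable_cong]: "sets mu = sets borel"
  by (simp add: mu_def law_def)

lemma space_mu[simp]: "space mu = UNIV"
  by (simp add: mu_def law_def)

lemma emeasure_mu: "A \<in> sets borel \<Longrightarrow> emeasure mu A = (\<integral>\<^sup>+x. ennreal (f x) * indicator A x \<partial>lborel)"
  unfolding mu_def law_def by (subst emeasure_density) auto

lemma emeasure_Iic: "emeasure mu {..x} = ennreal (F x)"
  by (simp add: emeasure_mu nn_integral_has_integral_lebesgue'[OF _ F_density] f_nonneg)

lemma emeasure_Iio: "emeasure mu {..<x} = ennreal (F x)"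
  by (simp add: emeasure_mu nn_integral_has_integral_lebesgue'[OF _ F_density_lt] f_nonneg)

lemma prob_mu: "prob_space mu"
proof
  have "(SUP n. emeasure mu {..real n}) = emeasure mu (\<Union>n. {..real n})"
    by (rule SUP_emeasure_incseq) (auto simp: incseq_def)
  also have "(\<Union>n. {..real n}) = UNIV"
    by (auto intro: real_arch_simple)
  finally have eq: "emeasure mu UNIV = (SUP n. ennreal (F (real n)))"
    by (simp add: emeasure_Iic)
  have "(\<lambda>n. ennreal (F (real n))) \<longlonglongrightarrow> ennreal 1"
    by (intro tendsto_ennrealI F_lim[THEN filterlim_compose] filterlim_real_sequentially)
  moreover have "(\<lambda>n. ennreal (F (real n))) \<longlonglongrightarrow> (SUP n. ennreal (F (real n)))"
    by (rule LIMSEQ_SUP) (auto simp: incseq_def intro!: ennreal_leI F_mono)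
  ultimately have "(SUP n. ennreal (F (real n))) = 1"
    using LIMSEQ_unique by fastforce
  thus "emeasure mu (space mu) = 1" using eq by simp
qed

lemma F_strict: assumes "0 \<le> x" "x < y" shows "F x < F y"
proof -
  have "(x+y)/2 \<in> {x<..<y} \<inter> closure {x. f x \<noteq> 0}"
    using assms by (simp add: f_support)
  hence "{x<..<y} \<inter> closure {x. f x \<noteq> 0} \<noteq> {}" by blast
  then obtain z where z: "x < z" "z < y" "f z \<noteq> 0"
    using open_Int_closure_eq_empty[of "{x<..<y}" "{x. f x \<noteq> 0}"] by auto
  have fz: "0 < f z" using z f_nonneg[of z] by auto
  have "isCont f z" using z assms by (intro f_isCont) auto
  then obtain d where d: "d > 0" "\<And>w. dist w z < d \<Longrightarrow> dist (f w) (f z) < f z / 2"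
    using fz unfolding continuous_at_eps_delta by (metis half_gt_zero)
  define e where "e = min d (min (z - x) (y - z)) / 2"
  have m: "min d (min (z - x) (y - z)) \<le> z - x" "min d (min (z - x) (y - z)) \<le> y - z"
    "min d (min (z - x) (y - z)) \<le> d" "0 < min d (min (z - x) (y - z))" using d z by auto
  have e: "e > 0" "e < d" "x < z - e" "z + e \<le> y"
    using m unfolding e_def by linarith+
  have fge: "f z / 2 \<le> f w" if "w \<in> {z-e..z+e}" for w
  proof -
    have "dist w z < d" using that e by (auto simp: dist_real_def)
    from d(2)[OF this] have "\<bar>f w - f z\<bar> < f z / 2" by (simp add: dist_real_def)
    thus ?thesis by (auto simp: abs_if split: if_splits)
  qed
  have "ennreal (f z / 2) * ennreal (2*e) = (\<integral>\<^sup>+w. ennreal (f z / 2) * indicator {z-e..z+e} w \<partial>lborel)"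
    using e by (simp add: nn_integral_cmult_indicator)
  also have "\<dots> \<le> (\<integral>\<^sup>+w. ennreal (f w) * indicator {z-e..z+e} w \<partial>lborel)"
    by (intro nn_integral_mono) (auto simp: indicator_def intro!: ennreal_leI fge)
  also have "\<dots> = emeasure mu {z-e..z+e}" by (simp add: emeasure_mu)
  finally have le1: "ennreal (f z * e) \<le> emeasure mu {z-e..z+e}"
    using fz e by (simp add: ennreal_mult'[symmetric] mult_ac)
  have "emeasure mu {..x} + emeasure mu {z-e..z+e} = emeasure mu ({..x} \<union> {z-e..z+e})"
    using e by (intro plus_emeasure) auto
  also have "\<dots> \<le> emeasure mu {..y}"
    using e by (intro emeasure_mono) auto
  finally have "ennreal (F x) + ennreal (f z * e) \<le> ennreal (F y)"
    using le1 by (simp add: emeasure_Iic) (meson add_left_mono order_trans)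
  hence "F x + f z * e \<le> F y"
    using fz e F_nonneg by (simp add: ennreal_plus[symmetric] del: ennreal_plus)
  thus ?thesis using fz e by (smt (verit) mult_pos_pos)
qed

lemma F_less1: "F x < 1"
proof (cases "x < 0")
  case True thus ?thesis using F_nonpos by simp
next
  case False thus ?thesis using F_strict[of x "x+1"] F_le1[of "x+1"] by simp
qed

lemma F_pos: "0 < x \<Longrightarrow> 0 < F x"
  using F_strict[of 0 x] F_nonpos[of 0] by simp

lemma F_less_iff: "0 \<le> x \<Longrightarrow> 0 \<le> y \<Longrightarrow> F x < F y \<longleftrightarrow> x < y"
  using F_strict[of x y] F_mono[of y x] by linarith

lemma F_le_iff: "0 \<le> x \<Longrightarrow> 0 \<le> y \<Longrightarrow> F x \<le> F y \<longleftrightarrow> x \<le> y"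
  using F_strict[of y x] F_mono[of x y] by linarith

lemma Finv_ex: assumes "0 \<le> u" "u < 1" shows "\<exists>y. 0 \<le> y \<and> F y = u"
proof -
  have "\<forall>\<^sub>F x in at_top. u < F x"
    using F_lim assms(2) by (rule order_tendstoD)
  then obtain b where b: "\<And>x. x \<ge> b \<Longrightarrow> u < F x" by (auto simp: eventually_at_top_linorder)
  have "\<exists>x. 0 \<le> x \<and> x \<le> max 0 b \<and> F x = u"
    using b[of "max 0 b"] assms F_nonpos[of 0]
    by (intro IVT' continuous_on_subset[OF F_cont]) auto
  thus ?thesis by auto
qed

lemma Finv: assumes "0 \<le> u" "u < 1" shows "0 \<le> Finv F u" "F (Finv F u) = u"
proof -
  have "\<exists>!y. 0 \<le> y \<and> F y = u"
  proof -
    obtain y where y: "0 \<le> y" "F y = u" using Finv_ex[OF assms] by blast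
    have "z = y" if "0 \<le> z" "F z = u" for z
      using F_le_iff[of z y] F_le_iff[of y z] that y by auto
    thus ?thesis using y by blast
  qed
  from theI'[OF this] show "0 \<le> Finv F u" "F (Finv F u) = u" by (auto simp: Finv_def)
qed

lemma Finv_F: "0 \<le> y \<Longrightarrow> Finv F (F y) = y"
  unfolding Finv_def
proof (rule the_equality)
  fix z assume "0 \<le> y" "0 \<le> z \<and> F z = F y"
  thus "z = y" using F_le_iff[of z y] F_le_iff[of y z] by auto
qed simp

lemma g_decr: assumes "0 < s" "s \<le> t" shows "(1+t) * f t \<le> (1+s) * f s"
proof (rule DERIV_nonpos_imp_nonincreasing[OF assms(2)])
  fix x assume x: "s \<le> x" "x \<le> t"
  hence "0 < x" using assms by auto
  have D: "(f has_real_derivative deriv f x) (at x)"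
    using f_diff[OF \<open>0<x\<close>] by (simp add: DERIV_deriv_iff_real_differentiable)
  have "deriv f x \<le> - f x / (1 + x)"
    using f_cond[of "F x"] F_pos[OF \<open>0<x\<close>] F_less1[of x] Finv_F[of x] \<open>0<x\<close> by simp
  hence "f x + (1+x) * deriv f x \<le> 0"
    using \<open>0<x\<close> by (simp add: field_simps)
  moreover have d1: "((\<lambda>x. 1+x) has_real_derivative 1) (at x)"
    by (auto intro!: derivative_eq_intros)
  have "((\<lambda>x. (1+x) * f x) has_real_derivative (1 * f x + deriv f x * (1+x))) (at x)"
    by (rule DERIV_mult[OF d1 D])
  ultimately show "\<exists>y. ((\<lambda>x. (1+x) * f x) has_real_derivative y) (at x) \<and> y \<le> 0"
    by (intro exI[of _ "1 * f x + deriv f x * (1+x)"]) (simp add: mult.commute)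
qed

lemma f_pos: assumes "0 < y" shows "0 < f y"
proof (rule ccontr)
  assume "\<not> 0 < f y"
  hence fy: "f y = 0" using f_nonneg[of y] by auto
  have ft: "f t = 0" if "t \<ge> y" for t
  proof -
    have "(1+t) * f t \<le> 0" using g_decr[OF assms that] fy by simp
    moreover have "0 < 1 + t" using that assms by simp
    ultimately show ?thesis using f_nonneg[of t] by (simp add: mult_le_0_iff)
  qed
  have "{x. f x \<noteq> 0} \<subseteq> {0..y}"
  proof
    fix x assume "x \<in> {x. f x \<noteq> 0}"
    hence "f x \<noteq> 0" by simp
    have "0 \<le> x" using f_neg[of x] \<open>f x \<noteq> 0\<close> by force
    moreover have "x \<le> y" using ft[of x] \<open>f x \<noteq> 0\<close> by force
    ultimately show "x \<in> {0..y}" by simp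
  qed
  hence "closure {x. f x \<noteq> 0} \<subseteq> {0..y}"
    by (intro closure_minimal) auto
  thus False using f_support assms by auto
qed

end


definition phi :: "real \<Rightarrow> real \<Rightarrow> real \<Rightarrow> real" where
  "phi a b u = max a u * max b u"

lemma phi_integral:
  assumes "0 \<le> a" "a \<le> b" "b \<le> 1"
  shows "(phi a b has_integral (a^2*b/2 + b^3/6 + 1/3)) {0..1}"
proof -
  have i1: "(phi a b has_integral (a*b*a)) {0..a}"
  proof -
    have c: "((\<lambda>u. a*b) has_integral (a*b*a)) {0..a}"
      using has_integral_const_real[of "a*b" 0 a] assms by (simp add: mult_ac)
    show ?thesis
      by (rule has_integral_spike[OF negligible_empty _ c]) (use assms in \<open>auto simp: phi_def\<close>)
  qed
  have i2: "(phi a b has_integral (b*(b^2-a^2)/2)) {a..b}"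
  proof -
    have c: "((\<lambda>u. b*u) has_integral (b*(b^2-a^2)/2)) {a..b}"
    proof -
      have d: "((\<lambda>u. b*u^2/2) has_real_derivative b*x) (at x within {a..b})" for x
        by (auto intro!: derivative_eq_intros)
      show ?thesis
        using fundamental_theorem_of_calculus[of a b "\<lambda>u. b*u^2/2" "\<lambda>u. b*u"] assms d
        by (auto simp: has_real_derivative_iff_has_vector_derivative[symmetric] right_diff_distrib diff_divide_distrib)
    qed
    show ?thesis
      by (rule has_integral_spike[OF negligible_empty _ c]) (use assms in \<open>auto simp: phi_def algebra_simps\<close>)
  qed
  have i3: "(phi a b has_integral ((1 - b^3)/3)) {b..1}"
  proof -
    have c: "((\<lambda>u. u^2) has_integral ((1 - b^3)/3)) {b..1}"
    proof -
      have d: "((\<lambda>u. u^3/3) has_real_derivative x^2) (at x within {b..1})" for x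
        by (auto intro!: derivative_eq_intros)
      show ?thesis
        using fundamental_theorem_of_calculus[of b 1 "\<lambda>u. u^3/3" "\<lambda>u. u^2"] assms d
        by (auto simp: has_real_derivative_iff_has_vector_derivative[symmetric] diff_divide_distrib)
    qed
    show ?thesis
      by (rule has_integral_spike[OF negligible_empty _ c]) (use assms in \<open>auto simp: phi_def algebra_simps power2_eq_square\<close>)
  qed
  have "(phi a b has_integral (a*b*a + b*(b^2-a^2)/2)) {0..b}"
    using has_integral_combine[OF _ _ i1 i2] assms by simp
  hence "(phi a b has_integral (a*b*a + b*(b^2-a^2)/2 + (1 - b^3)/3)) {0..1}"
    using has_integral_combine[OF _ _ _ i3] assms by simp
  moreover have "a*b*a + b*(b^2-a^2)/2 + (1 - b^3)/3 = a^2*b/2 + b^3/6 + 1/3"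
    by (simp add: field_simps power2_eq_square power3_eq_cube)
  ultimately show ?thesis by simp
qed

lemma phi_diff_integral:
  assumes "0 \<le> a1" "a1 \<le> a2" "a2 \<le> b2" "b2 \<le> b1" "b1 \<le> 1" "a2 - a1 = b1 - b2"
  shows "((\<lambda>u. phi a1 b1 u - phi a2 b2 u) has_integral ((b1-a1)^3 - (b2-a2)^3)/12) {0..1}"
proof -
  have H: "((\<lambda>u. phi a1 b1 u - phi a2 b2 u) has_integral
     ((a1^2*b1/2 + b1^3/6 + 1/3) - (a2^2*b2/2 + b2^3/6 + 1/3))) {0..1}"
    using assms by (intro has_integral_diff phi_integral) auto
  have E: "(a1^2*b1/2 + b1^3/6 + 1/3) - (a2^2*b2/2 + b2^3/6 + 1/3) = ((b1-a1)^3 - (b2-a2)^3)/12"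
  proof -
    have b2: "b2 = a1 + b1 - a2" using assms by simp
    show ?thesis unfolding b2 by (simp add: field_simps power2_eq_square power3_eq_cube)
  qed
  show ?thesis using H unfolding E .
qed

lemma phi_sign:
  assumes "0 \<le> a1" "a1 \<le> a2" "a2 \<le> b2" "b2 \<le> b1" "0 < b1" "a2 - a1 = b1 - b2" "0 \<le> u"
  shows "u \<le> a2*b2/b1 \<Longrightarrow> phi a1 b1 u \<le> phi a2 b2 u"
    and "a2*b2/b1 \<le> u \<Longrightarrow> phi a2 b2 u \<le> phi a1 b1 u"
proof -
  have key: "a1*b1 \<le> a2*b2"
  proof -
    have "a2*b2 - a1*b1 = (a2-a1)*(b2-a1)" using assms by (simp add: algebra_simps)
       (smt (verit) assms(6) mult.commute right_diff_distrib')
    thus ?thesis using assms by (smt (verit) mult_nonneg_nonneg)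
  qed
  have u0: "a2*b2/b1 \<le> a2" using assms by (simp add: divide_le_eq mult_left_mono)
  { assume u: "u \<le> a2*b2/b1"
    hence ua: "u \<le> a2" using u0 by linarith
    have "u*b1 \<le> a2*b2" using u assms by (simp add: le_divide_eq)
    hence "max a1 u * b1 \<le> a2*b2" using key by (auto simp: max_def)
    moreover have "phi a2 b2 u = a2*b2" using ua assms by (simp add: phi_def max_def)
    moreover have "phi a1 b1 u = max a1 u * b1" using ua assms by (simp add: phi_def max_def)
    ultimately show "phi a1 b1 u \<le> phi a2 b2 u" by simp
  }
  { assume u: "a2*b2/b1 \<le> u"
    show "phi a2 b2 u \<le> phi a1 b1 u"
    proof (cases "u \<le> a2")
      case True
      have "a2*b2 \<le> u*b1" using u assms by (simp add: divide_le_eq)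
      also have "\<dots> \<le> max a1 u * max b1 u" using assms by (intro mult_mono) auto
      finally have "a2*b2 \<le> phi a1 b1 u" by (simp add: phi_def)
      moreover have "phi a2 b2 u = a2*b2" using True assms by (simp add: phi_def max_def)
      ultimately show ?thesis by simp
    next
      case False
      have "u * max b2 u \<le> max a1 u * max b1 u" using assms by (intro mult_mono) auto
      thus ?thesis using False by (simp add: phi_def max_def)
    qed
  }
qed



context dens
begin

lemma F_borel[measurable]: "F \<in> borel_measurable borel"
  using F_cont by (rule borel_measurable_continuous_onI)

definition U :: "real measure" where "U = density lborel (indicator {0..1})"

lemma sets_U[simp, measurable_cong]: "sets U = sets borel"
  by (simp add: U_def)

lemma space_U[simp]: "space U = UNIV"
  by (simp add: U_def)

lemma emeasure_U: "A \<in> sets borel \<Longrightarrow> emeasure U A = emeasure lborel ({0..1} \<inter> A)"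
  unfolding U_def
  by (subst emeasure_density) (auto simp: indicator_inter_arith[symmetric] mult.commute Int_commute)

lemma real_distribution_U: "real_distribution U"
proof -
  have "prob_space U"
    by (rule prob_spaceI) (simp add: emeasure_U)
  thus ?thesis by (simp add: real_distribution_def real_distribution_axioms_def)
qed

lemma real_distribution_distr: "real_distribution (distr mu borel F)"
proof -
  interpret prob_space mu by (rule prob_mu)
  have "prob_space (distr mu borel F)" by (rule prob_space_distr) simp
  thus ?thesis by (simp add: real_distribution_def real_distribution_axioms_def)
qed

lemma measure_Iic: "measure mu {..x} = F x"
  using emeasure_Iic[of x] F_nonneg[of x] by (simp add: measure_def)

lemma cdf_U: "cdf U x = (if x < 0 then 0 else if x < 1 then x else 1)"
proof -
  have "cdf U x = measure lborel ({0..1} \<inter> {..x})"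
    by (simp add: cdf_def measure_def emeasure_U)
  also have "\<dots> = (if x < 0 then 0 else if x < 1 then x else 1)"
  proof -
    have "{0..1} \<inter> {..x} = (if x < 0 then {} else if x < 1 then {0..x} else {0..1::real})"
      by auto
    thus ?thesis by simp
  qed
  finally show ?thesis .
qed

lemma cdf_distr: "cdf (distr mu borel F) x = (if x < 0 then 0 else if x < 1 then x else 1)"
proof -
  interpret prob_space mu by (rule prob_mu)
  have eq: "cdf (distr mu borel F) x = measure mu (F -` {..x})"
    by (simp add: cdf_def measure_distr)
  show ?thesis
  proof (cases "x < 0")
    case True
    have "\<not> F y \<le> x" for y using F_nonneg[of y] True by linarith
    hence "F -` {..x} = {}" by auto
    thus ?thesis using eq True by simp
  next
    case False
    show ?thesis
    proof (cases "x < 1")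
      case True
      define s where "s = Finv F x"
      have s: "0 \<le> s" "F s = x" using Finv[of x] True False by (auto simp: s_def)
      have mem: "F y \<le> x \<longleftrightarrow> y \<le> s" for y
      proof (cases "y < 0")
        case True then show ?thesis using s F_nonpos[of y] F_nonneg[of s] by simp
      next
        case False then show ?thesis using F_le_iff[of y s] s by simp
      qed
      have "F -` {..x} = {..s}" using mem by auto
      thus ?thesis using eq True False s measure_Iic[of s] by simp
    next
      case False2: False
      have "F y \<le> x" for y using F_le1[of y] False2 by linarith
      hence "F -` {..x} = UNIV" by auto
      thus ?thesis using eq False False2 prob_space by simp
    qed
  qed
qed

lemma distr_F: "distr mu borel F = U"
  by (rule cdf_unique[OF real_distribution_distr real_distribution_U]) (simp add: fun_eq_iff cdf_U cdf_distr)

lemma transfer: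
  assumes [measurable]: "g \<in> borel_measurable borel"
  shows "(\<integral>\<^sup>+t. ennreal (f t) * g (F t) \<partial>lborel) = (\<integral>\<^sup>+u. g u * indicator {0..1} u \<partial>lborel)"
proof -
  have "(\<integral>\<^sup>+t. ennreal (f t) * g (F t) \<partial>lborel) = (\<integral>\<^sup>+t. g (F t) \<partial>mu)"
    unfolding mu_def law_def by (subst nn_integral_density) auto
  also have "\<dots> = (\<integral>\<^sup>+u. g u \<partial>distr mu borel F)"
    by (subst nn_integral_distr) auto
  also have "\<dots> = (\<integral>\<^sup>+u. g u \<partial>U)" by (simp add: distr_F)
  also have "\<dots> = (\<integral>\<^sup>+u. g u * indicator {0..1} u \<partial>lborel)"
    unfolding U_def by (subst nn_integral_density) (auto simp: mult.commute)
  finally show ?thesis .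
qed

end


definition wt :: "real \<Rightarrow> real \<Rightarrow> real" where "wt c t = (if c < t then 1 / (1+t) else 0)"

lemma wt_nonneg: "0 \<le> c \<Longrightarrow> 0 \<le> wt c t" by (simp add: wt_def)

lemma wt_borel[measurable]: "wt c \<in> borel_measurable borel"
  unfolding wt_def by measurable

lemma ln_layer:
  assumes c: "0 \<le> c"
  shows "ennreal (ln (1 + max s c)) = ennreal (ln (1+c)) + (\<integral>\<^sup>+t. ennreal (wt c t) * indicator {..s} t \<partial>lborel)"
proof (cases "s \<le> c")
  case True
  have Z: "ennreal (wt c t) * indicator {..s} t = 0" for t
    using True by (auto simp: wt_def indicator_def)
  have "(\<integral>\<^sup>+t. ennreal (wt c t) * indicator {..s} t \<partial>lborel) = 0" by (simp only: Z) simp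
  thus ?thesis using True by (simp add: max_def)
next
  case False
  hence cs: "c < s" by simp
  have d: "((\<lambda>t. ln (1+t)) has_real_derivative 1/(1+x)) (at x within {c..s})" if "x \<in> {c..s}" for x
    using that c by (auto intro!: derivative_eq_intros simp: divide_inverse)
  have i: "((\<lambda>t. 1/(1+t)) has_integral (ln (1+s) - ln (1+c))) {c..s}"
    using fundamental_theorem_of_calculus[of c s "\<lambda>t. ln (1+t)" "\<lambda>t. 1/(1+t)"] cs d
    by (auto simp: has_real_derivative_iff_has_vector_derivative[symmetric])
  have i2: "((\<lambda>t. 1/(1+t)) has_integral (ln (1+s) - ln (1+c))) {c<..s}"
  proof -
    have "((\<lambda>t. 1/(1+t)) has_integral (ln (1+s) - ln (1+c))) {c..s} \<longleftrightarrow>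
          ((\<lambda>t. 1/(1+t)) has_integral (ln (1+s) - ln (1+c))) {c<..s}"
      by (rule has_integral_spike_set_eq; rule negligible_subset[of "{c}"]) auto
    thus ?thesis using i by blast
  qed
  have "(\<integral>\<^sup>+t. ennreal (wt c t) * indicator {..s} t \<partial>lborel) =
        (\<integral>\<^sup>+t. ennreal (1/(1+t)) * indicator {c<..s} t \<partial>lborel)"
    by (intro nn_integral_cong) (auto simp: wt_def indicator_def)
  also have "\<dots> = ennreal (ln (1+s) - ln (1+c))"
    by (rule nn_integral_has_integral_lebesgue'[OF _ i2]) (use c in auto)
  finally have I: "(\<integral>\<^sup>+t. ennreal (wt c t) * indicator {..s} t \<partial>lborel) = ennreal (ln (1+s) - ln (1+c))" .
  have l1: "ln (1+c) \<le> ln (1+s)" using cs c by simp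
  have l0: "0 \<le> ln (1+c)" using c by simp
  have "ennreal (ln (1 + max s c)) = ennreal (ln (1+c) + (ln (1+s) - ln (1+c)))"
    using cs by (simp add: max_def)
  also have "\<dots> = ennreal (ln (1+c)) + ennreal (ln (1+s) - ln (1+c))"
    using l0 l1 by (intro ennreal_plus) auto
  finally show ?thesis using I by simp
qed

lemma trunc_borel[measurable]: "trunc A \<in> borel_measurable borel"
  unfolding trunc_def by measurable

context dens
begin

lemma prob_P: "prob_space (mu \<Otimes>\<^sub>M mu)"
  by (rule prob_space_pair[OF prob_mu prob_mu])

lemma layer:
  assumes c: "0 \<le> c" and Mm[measurable]: "Mf \<in> borel_measurable (mu \<Otimes>\<^sub>M mu)"
  shows "(\<integral>\<^sup>+p. ennreal (ln (1 + max (Mf p) c)) \<partial>(mu \<Otimes>\<^sub>M mu)) =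
     ennreal (ln (1+c)) + (\<integral>\<^sup>+t. ennreal (wt c t) * emeasure (mu \<Otimes>\<^sub>M mu) {p. t \<le> Mf p} \<partial>lborel)"
proof -
  let ?P = "mu \<Otimes>\<^sub>M mu"
  interpret P: prob_space ?P by (rule prob_P)
  interpret PL: pair_sigma_finite ?P lborel
    by (intro pair_sigma_finite.intro prob_space_imp_sigma_finite prob_P lborel.sigma_finite_measure_axioms)
  have G[measurable]: "(\<lambda>(p, t). ennreal (wt c t) * indicator {..Mf p} t) \<in> borel_measurable (?P \<Otimes>\<^sub>M lborel)"
  proof -
    have "(\<lambda>(p, t). ennreal (wt c t) * indicator {..Mf p} t) =
          (\<lambda>x. ennreal (wt c (snd x)) * (if snd x \<le> Mf (fst x) then 1 else 0))"
      by (auto simp: fun_eq_iff indicator_def)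
    also have "\<dots> \<in> borel_measurable (?P \<Otimes>\<^sub>M lborel)" by measurable
    finally show ?thesis .
  qed
  have Gi: "(\<lambda>p. \<integral>\<^sup>+t. ennreal (wt c t) * indicator {..Mf p} t \<partial>lborel) \<in> borel_measurable ?P"
    using lborel.borel_measurable_nn_integral[OF G] by simp
  have "(\<integral>\<^sup>+p. ennreal (ln (1 + max (Mf p) c)) \<partial>?P) =
        (\<integral>\<^sup>+p. ennreal (ln (1+c)) + (\<integral>\<^sup>+t. ennreal (wt c t) * indicator {..Mf p} t \<partial>lborel) \<partial>?P)"
    by (intro nn_integral_cong ln_layer c)
  also have "\<dots> = (\<integral>\<^sup>+p. ennreal (ln (1+c)) \<partial>?P) + (\<integral>\<^sup>+p. (\<integral>\<^sup>+t. ennreal (wt c t) * indicator {..Mf p} t \<partial>lborel) \<partial>?P)"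
    by (rule nn_integral_add) (use Gi in auto)
  also have "(\<integral>\<^sup>+p. ennreal (ln (1+c)) \<partial>?P) = ennreal (ln (1+c))"
    by (simp add: P.emeasure_space_1)
  also have "(\<integral>\<^sup>+p. (\<integral>\<^sup>+t. ennreal (wt c t) * indicator {..Mf p} t \<partial>lborel) \<partial>?P) =
             (\<integral>\<^sup>+t. (\<integral>\<^sup>+p. ennreal (wt c t) * indicator {..Mf p} t \<partial>?P) \<partial>lborel)"
    by (rule PL.Fubini'[symmetric]) (use G in simp)
  also have "\<dots> = (\<integral>\<^sup>+t. ennreal (wt c t) * emeasure ?P {p. t \<le> Mf p} \<partial>lborel)"
  proof (intro nn_integral_cong)
    fix t
    have "(\<integral>\<^sup>+p. ennreal (wt c t) * indicator {..Mf p} t \<partial>?P) =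
          (\<integral>\<^sup>+p. ennreal (wt c t) * indicator {p. t \<le> Mf p} p \<partial>?P)"
      by (intro nn_integral_cong) (auto simp: indicator_def)
    also have "\<dots> = ennreal (wt c t) * emeasure ?P {p. t \<le> Mf p}"
    proof (rule nn_integral_cmult_indicator)
      have "{p \<in> space ?P. t \<le> Mf p} \<in> sets ?P" by measurable
      thus "{p. t \<le> Mf p} \<in> sets ?P" by (simp add: space_pair_measure)
    qed
    finally show "(\<integral>\<^sup>+p. ennreal (wt c t) * indicator {..Mf p} t \<partial>?P) = ennreal (wt c t) * emeasure ?P {p. t \<le> Mf p}" .
  qed
  finally show ?thesis .
qed

lemma meas_trunc_inf: "0 < t \<Longrightarrow> measure mu {y. trunc \<infinity> y < t} = 1"
proof -
  assume t: "0 < t"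
  interpret prob_space mu by (rule prob_mu)
  have "{y. trunc \<infinity> y < t} = space mu" using t by (auto simp: trunc_def)
  thus ?thesis using prob_space by simp
qed

lemma measure_Iio: "measure mu {..<x} = F x"
  using emeasure_Iio[of x] F_nonneg[of x] by (simp add: measure_def)

lemma meas_trunc_ereal: "0 < t \<Longrightarrow> measure mu {y. trunc (ereal r) y < t} = max (F r) (F t)"
proof -
  assume t: "0 < t"
  have "{y. trunc (ereal r) y < t} = {..<max r t}" using t by (auto simp: trunc_def)
  hence "measure mu {y. trunc (ereal r) y < t} = F (max r t)" by (simp add: measure_Iio)
  also have "\<dots> = max (F r) (F t)"
  proof (cases "r \<le> t")
    case True thus ?thesis using F_mono[of r t] by (simp add: max_def)
  next
    case False thus ?thesis using F_mono[of t r] by (simp add: max_def)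
  qed
  finally show ?thesis .
qed

lemma prob_ge:
  assumes t: "0 < t"
  shows "emeasure (mu \<Otimes>\<^sub>M mu) {p. t \<le> max (trunc A (fst p)) (trunc B (snd p))} =
         ennreal (1 - measure mu {y. trunc A y < t} * measure mu {y. trunc B y < t})"
proof -
  let ?P = "mu \<Otimes>\<^sub>M mu"
  interpret mu: prob_space mu by (rule prob_mu)
  interpret P: prob_space ?P by (rule prob_P)
  let ?X = "{y. trunc A y < t}" and ?Y = "{y. trunc B y < t}"
  have XY[measurable]: "?X \<in> sets mu" "?Y \<in> sets mu"
  proof -
    have "{y \<in> space mu. trunc A y < t} \<in> sets mu" "{y \<in> space mu. trunc B y < t} \<in> sets mu"
      by measurable
    thus "?X \<in> sets mu" "?Y \<in> sets mu" by simp_all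
  qed
  have eq: "{p. t \<le> max (trunc A (fst p)) (trunc B (snd p))} = space ?P - ?X \<times> ?Y"
    by (auto simp: space_pair_measure not_le)
  have "emeasure ?P (?X \<times> ?Y) = emeasure mu ?X * emeasure mu ?Y"
    using XY by (rule mu.emeasure_pair_measure_Times)
  hence pr: "P.prob (?X \<times> ?Y) = mu.prob ?X * mu.prob ?Y"
    by (simp add: mu.emeasure_eq_measure P.emeasure_eq_measure ennreal_mult[symmetric])
  have "emeasure ?P {p. t \<le> max (trunc A (fst p)) (trunc B (snd p))} = ennreal (P.prob (space ?P - ?X \<times> ?Y))"
    by (simp add: eq P.emeasure_eq_measure)
  also have "P.prob (space ?P - ?X \<times> ?Y) = 1 - P.prob (?X \<times> ?Y)"
    using XY by (intro P.prob_compl pair_measureI) auto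
  finally show ?thesis using pr by simp
qed

end


context dens
begin

lemma phi_bounds: "0 \<le> a \<Longrightarrow> a \<le> 1 \<Longrightarrow> 0 \<le> b \<Longrightarrow> b \<le> 1 \<Longrightarrow> 0 \<le> u \<Longrightarrow> u \<le> 1 \<Longrightarrow>
   0 \<le> phi a b u \<and> phi a b u \<le> 1"
  unfolding phi_def by (auto intro!: mult_le_one)

lemma phi_borel[measurable]: "(\<lambda>u. phi a b u) \<in> borel_measurable borel"
  unfolding phi_def by measurable

lemma phi_cont: "continuous_on S (\<lambda>u. phi a b u)"
  unfolding phi_def by (intro continuous_intros)

lemma Psi_formula:
  assumes lam: "0 < lam" "lam \<le> 2" and c: "0 \<le> c" and q: "max 0 (lam-1) \<le> q" "q \<le> lam/2"
  shows "Psi F f lam c q = ennreal (ln (1+c)) + (\<integral>\<^sup>+t. ennreal (wt c t * (1 - phi (1-lam+q) (1-q) (F t))) \<partial>lborel)"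
proof -
  let ?A = "Finv_ext F (1 - (lam - q))" and ?B = "Finv_ext F (1 - q)"
  let ?M = "\<lambda>p. max (trunc ?A (fst p)) (trunc ?B (snd p))"
  have Mm: "?M \<in> borel_measurable (mu \<Otimes>\<^sub>M mu)" by measurable
  have "Psi F f lam c q = (\<integral>\<^sup>+p. ennreal (ln (1 + max (?M p) c)) \<partial>(mu \<Otimes>\<^sub>M mu))"
    by (simp add: Psi_def mu_def)
  also have "\<dots> = ennreal (ln (1+c)) + (\<integral>\<^sup>+t. ennreal (wt c t) * emeasure (mu \<Otimes>\<^sub>M mu) {p. t \<le> ?M p} \<partial>lborel)"
    by (rule layer[OF c Mm])
  also have "(\<integral>\<^sup>+t. ennreal (wt c t) * emeasure (mu \<Otimes>\<^sub>M mu) {p. t \<le> ?M p} \<partial>lborel) =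
             (\<integral>\<^sup>+t. ennreal (wt c t * (1 - phi (1-lam+q) (1-q) (F t))) \<partial>lborel)"
  proof (intro nn_integral_cong)
    fix t
    show "ennreal (wt c t) * emeasure (mu \<Otimes>\<^sub>M mu) {p. t \<le> ?M p} = ennreal (wt c t * (1 - phi (1-lam+q) (1-q) (F t)))"
    proof (cases "c < t")
      case False thus ?thesis by (simp add: wt_def)
    next
      case True
      hence t: "0 < t" using c by simp
      have mA: "measure mu {y. trunc ?A y < t} = max (1-lam+q) (F t)"
      proof -
        have a: "0 \<le> 1 - (lam - q)" "1 - (lam - q) < 1" using lam q by auto
        hence "?A = ereal (Finv F (1 - (lam - q)))" by (simp add: Finv_ext_def)
        thus ?thesis using meas_trunc_ereal[OF t] Finv(2)[OF a] by simp
      qed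
      have mB: "measure mu {y. trunc ?B y < t} = max (1-q) (F t)"
      proof (cases "q = 0")
        case True
        hence "?B = \<infinity>" by (simp add: Finv_ext_def)
        thus ?thesis using meas_trunc_inf[OF t] True F_le1[of t] by simp
      next
        case False
        have a: "0 \<le> 1 - q" "1 - q < 1" using lam q False by auto
        hence "?B = ereal (Finv F (1 - q))" by (simp add: Finv_ext_def)
        thus ?thesis using meas_trunc_ereal[OF t] Finv(2)[OF a] by simp
      qed
      have "emeasure (mu \<Otimes>\<^sub>M mu) {p. t \<le> ?M p} = ennreal (1 - phi (1-lam+q) (1-q) (F t))"
        using prob_ge[OF t, of ?A ?B] mA mB by (simp add: phi_def)
      thus ?thesis using wt_nonneg[OF c, of t] by (simp add: ennreal_mult')
    qed
  qed
  finally show ?thesis .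
qed

lemma compare:
  assumes c: "0 \<le> c" and h: "0 \<le> a1" "a1 \<le> a2" "a2 \<le> b2" "b2 \<le> b1" "b1 \<le> 1" "a2 - a1 = b1 - b2"
  shows "(\<integral>\<^sup>+t. ennreal (wt c t * (1 - phi a1 b1 (F t))) \<partial>lborel) \<le>
         (\<integral>\<^sup>+t. ennreal (wt c t * (1 - phi a2 b2 (F t))) \<partial>lborel)"
proof (cases "a1 = a2")
  case True
  hence "b1 = b2" using h by simp
  thus ?thesis using True by simp
next
  case False
  hence a12: "a1 < a2" using h by simp
  have pos: "0 < a2" "0 < b2" "b2 < b1" "0 < b1" using h a12 by auto
  define u0 where "u0 = a2 * b2 / b1"
  have u0: "0 < u0" "u0 \<le> a2" "u0 < 1"
  proof -
    show "0 < u0" using pos by (simp add: u0_def)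
    show "u0 \<le> a2" using pos h by (simp add: u0_def divide_le_eq mult_left_mono)
    thus "u0 < 1" using pos h by linarith
  qed
  define t0 where "t0 = Finv F u0"
  have Ft0: "F t0 = u0" "0 \<le> t0" using Finv[of u0] u0 by (auto simp: t0_def)
  have t0: "0 < t0"
  proof (rule ccontr)
    assume "\<not> 0 < t0" hence "t0 = 0" using Ft0 by simp
    thus False using Ft0 F_nonpos[of 0] u0 by simp
  qed
  define r where "r t = (if c < t then 1 / ((1+t) * f t) else 0)" for t
  have r_nonneg: "0 \<le> r t" for t
  proof (cases "c < t")
    case True
    hence "0 < t" using c by simp
    thus ?thesis using True f_pos[of t] by (simp add: r_def)
  qed (simp add: r_def)
  have r_mono: "r s \<le> r t" if "0 < s" "s \<le> t" for s t
  proof (cases "c < s")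
    case True
    hence ct: "c < t" using that by simp
    have "(1+t) * f t \<le> (1+s) * f s" by (rule g_decr[OF that])
    moreover have "0 < (1+t) * f t" "0 < (1+s) * f s" using that f_pos[of s] f_pos[of t] by auto
    ultimately have "1 / ((1+s) * f s) \<le> 1 / ((1+t) * f t)"
      by (intro divide_left_mono) auto
    thus ?thesis using True ct by (simp add: r_def)
  next
    case False thus ?thesis using r_nonneg[of t] by (simp add: r_def)
  qed
  have w_eq: "wt c t = r t * f t" if "0 < t" for t
    using that f_pos[of t] by (simp add: wt_def r_def)
  define Dn where "Dn u = max 0 (phi a2 b2 u - phi a1 b1 u)" for u
  define Dp where "Dp u = max 0 (phi a1 b1 u - phi a2 b2 u)" for u
  have Dn_borel[measurable]: "Dn \<in> borel_measurable borel" unfolding Dn_def by measurable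
  have Dp_borel[measurable]: "Dp \<in> borel_measurable borel" unfolding Dp_def by measurable
  have Ft: "0 \<le> F t" "F t \<le> 1" for t using F_nonneg F_le1 by auto
  have hb1: "0 \<le> phi a1 b1 (F t) \<and> phi a1 b1 (F t) \<le> 1" for t
    using h Ft[of t] by (intro phi_bounds) auto
  have hb2: "0 \<le> phi a2 b2 (F t) \<and> phi a2 b2 (F t) \<le> 1" for t
    using h Ft[of t] by (intro phi_bounds) auto
  have wn: "0 \<le> wt c t" for t using wt_nonneg[OF c] .
  let ?X1 = "\<integral>\<^sup>+t. ennreal (wt c t * (1 - phi a1 b1 (F t))) \<partial>lborel"
  let ?X2 = "\<integral>\<^sup>+t. ennreal (wt c t * (1 - phi a2 b2 (F t))) \<partial>lborel"
  let ?Yn = "\<integral>\<^sup>+t. ennreal (wt c t * Dn (F t)) \<partial>lborel"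
  let ?Yp = "\<integral>\<^sup>+t. ennreal (wt c t * Dp (F t)) \<partial>lborel"
  have sum: "?X2 + ?Yn = ?X1 + ?Yp"
  proof -
    have "?X2 + ?Yn = (\<integral>\<^sup>+t. ennreal (wt c t * (1 - phi a2 b2 (F t))) + ennreal (wt c t * Dn (F t)) \<partial>lborel)"
      by (rule nn_integral_add[symmetric]) auto
    also have "\<dots> = (\<integral>\<^sup>+t. ennreal (wt c t * (1 - phi a1 b1 (F t))) + ennreal (wt c t * Dp (F t)) \<partial>lborel)"
    proof (intro nn_integral_cong)
      fix t
      have e: "wt c t * (1 - phi a2 b2 (F t)) + wt c t * Dn (F t) = wt c t * (1 - phi a1 b1 (F t)) + wt c t * Dp (F t)"
        by (simp add: Dn_def Dp_def max_def algebra_simps)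
      have n: "0 \<le> wt c t * (1 - phi a2 b2 (F t))" "0 \<le> wt c t * Dn (F t)"
              "0 \<le> wt c t * (1 - phi a1 b1 (F t))" "0 \<le> wt c t * Dp (F t)"
        using wn[of t] hb1[of t] hb2[of t] by (auto simp: Dn_def Dp_def)
      show "ennreal (wt c t * (1 - phi a2 b2 (F t))) + ennreal (wt c t * Dn (F t)) =
            ennreal (wt c t * (1 - phi a1 b1 (F t))) + ennreal (wt c t * Dp (F t))"
        using e n by (simp add: ennreal_plus[symmetric] del: ennreal_plus)
    qed
    also have "\<dots> = ?X1 + ?Yp"
      by (rule nn_integral_add) auto
    finally show ?thesis .
  qed
  have Dn_cont: "continuous_on {0..1} Dn" unfolding Dn_def by (intro continuous_intros phi_cont)
  have Dp_cont: "continuous_on {0..1} Dp" unfolding Dp_def by (intro continuous_intros phi_cont)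
  define In where "In = integral {0..1} Dn"
  define Ip where "Ip = integral {0..1} Dp"
  have In: "(Dn has_integral In) {0..1}"
    unfolding In_def by (rule integrable_integral[OF integrable_continuous_real[OF Dn_cont]])
  have Ip: "(Dp has_integral Ip) {0..1}"
    unfolding Ip_def by (rule integrable_integral[OF integrable_continuous_real[OF Dp_cont]])
  have Inp: "In \<le> Ip"
  proof -
    have "((\<lambda>u. Dp u - Dn u) has_integral (Ip - In)) {0..1}" by (rule has_integral_diff[OF Ip In])
    moreover have "(\<lambda>u. Dp u - Dn u) = (\<lambda>u. phi a1 b1 u - phi a2 b2 u)"
      by (auto simp: fun_eq_iff Dn_def Dp_def max_def)
    ultimately have "((\<lambda>u. phi a1 b1 u - phi a2 b2 u) has_integral (Ip - In)) {0..1}" by simp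
    hence "Ip - In = ((b1-a1)^3 - (b2-a2)^3)/12"
      using phi_diff_integral[OF h(1-5) h(6)] has_integral_unique by blast
    moreover have "(b2-a2)^3 \<le> (b1-a1)^3" using h by (intro power_mono) auto
    ultimately show ?thesis by simp
  qed
  have tr_n: "(\<integral>\<^sup>+t. ennreal (f t * Dn (F t)) \<partial>lborel) = ennreal In"
  proof -
    have "(\<integral>\<^sup>+t. ennreal (f t * Dn (F t)) \<partial>lborel) = (\<integral>\<^sup>+t. ennreal (f t) * ennreal (Dn (F t)) \<partial>lborel)"
      using f_nonneg by (simp add: ennreal_mult')
    also have "\<dots> = (\<integral>\<^sup>+u. ennreal (Dn u) * indicator {0..1} u \<partial>lborel)"
      by (rule transfer) measurable
    also have "\<dots> = ennreal In"
      by (rule nn_integral_has_integral_lebesgue'[OF _ In]) (simp add: Dn_def)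
    finally show ?thesis .
  qed
  have tr_p: "(\<integral>\<^sup>+t. ennreal (f t * Dp (F t)) \<partial>lborel) = ennreal Ip"
  proof -
    have "(\<integral>\<^sup>+t. ennreal (f t * Dp (F t)) \<partial>lborel) = (\<integral>\<^sup>+t. ennreal (f t) * ennreal (Dp (F t)) \<partial>lborel)"
      using f_nonneg by (simp add: ennreal_mult')
    also have "\<dots> = (\<integral>\<^sup>+u. ennreal (Dp u) * indicator {0..1} u \<partial>lborel)"
      by (rule transfer) measurable
    also have "\<dots> = ennreal Ip"
      by (rule nn_integral_has_integral_lebesgue'[OF _ Ip]) (simp add: Dp_def)
    finally show ?thesis .
  qed
  have Yn_le: "?Yn \<le> ennreal (r t0) * ennreal In"
  proof -
    have "?Yn \<le> (\<integral>\<^sup>+t. ennreal (r t0) * ennreal (f t * Dn (F t)) \<partial>lborel)"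
    proof (intro nn_integral_mono)
      fix t
      have "wt c t * Dn (F t) \<le> r t0 * (f t * Dn (F t))"
      proof (cases "Dn (F t) = 0")
        case True thus ?thesis by simp
      next
        case False
        hence "phi a1 b1 (F t) < phi a2 b2 (F t)" by (simp add: Dn_def max_def split: if_splits)
        hence "\<not> u0 \<le> F t" using phi_sign(2)[OF h(1-3) h(4) pos(4) h(6) Ft(1)[of t]] by (auto simp: u0_def)
        hence "F t < F t0" using Ft0 by simp
        hence tt0: "t < t0" using F_mono[of t0 t] by (auto simp: not_le[symmetric])
        show ?thesis
        proof (cases "0 < t")
          case True
          have "wt c t * Dn (F t) = r t * (f t * Dn (F t))" using w_eq[OF True] by simp
          also have "\<dots> \<le> r t0 * (f t * Dn (F t))"
            using r_mono[OF True] tt0 f_nonneg[of t] by (intro mult_right_mono) (auto simp: Dn_def)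
          finally show ?thesis .
        next
          case False
          hence "wt c t = 0" using c by (simp add: wt_def)
          thus ?thesis using r_nonneg[of t0] f_nonneg[of t] by (simp add: Dn_def)
        qed
      qed
      thus "ennreal (wt c t * Dn (F t)) \<le> ennreal (r t0) * ennreal (f t * Dn (F t))"
        using r_nonneg[of t0] by (simp add: ennreal_mult'[symmetric] ennreal_leI)
    qed
    also have "\<dots> = ennreal (r t0) * ennreal In"
      by (subst nn_integral_cmult) (auto simp: tr_n)
    finally show ?thesis .
  qed
  have Yp_ge: "ennreal (r t0) * ennreal Ip \<le> ?Yp"
  proof -
    have "ennreal (r t0) * ennreal Ip = (\<integral>\<^sup>+t. ennreal (r t0) * ennreal (f t * Dp (F t)) \<partial>lborel)"
      by (subst nn_integral_cmult) (auto simp: tr_p)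
    also have "\<dots> \<le> ?Yp"
    proof (intro nn_integral_mono)
      fix t
      have "r t0 * (f t * Dp (F t)) \<le> wt c t * Dp (F t)"
      proof (cases "Dp (F t) = 0")
        case True thus ?thesis by simp
      next
        case False
        hence "phi a2 b2 (F t) < phi a1 b1 (F t)" by (simp add: Dp_def max_def split: if_splits)
        hence "\<not> F t \<le> u0" using phi_sign(1)[OF h(1-3) h(4) pos(4) h(6) Ft(1)[of t]] by (auto simp: u0_def)
        hence "F t0 < F t" using Ft0 by simp
        hence tt0: "t0 < t" using F_mono[of t t0] by (auto simp: not_le[symmetric])
        hence tpos: "0 < t" using t0 by simp
        have "r t0 * (f t * Dp (F t)) \<le> r t * (f t * Dp (F t))"
          using r_mono[OF t0] tt0 f_nonneg[of t] by (intro mult_right_mono) (auto simp: Dp_def)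
        also have "\<dots> = wt c t * Dp (F t)" using w_eq[OF tpos] by simp
        finally show ?thesis .
      qed
      thus "ennreal (r t0) * ennreal (f t * Dp (F t)) \<le> ennreal (wt c t * Dp (F t))"
        using r_nonneg[of t0] by (simp add: ennreal_mult'[symmetric] ennreal_leI)
    qed
    finally show ?thesis .
  qed
  have "ennreal (r t0) * ennreal In \<le> ennreal (r t0) * ennreal Ip"
    using Inp by (intro mult_left_mono ennreal_leI) auto
  hence YnYp: "?Yn \<le> ?Yp" using Yn_le Yp_ge by (meson order_trans)
  have "ennreal (r t0) * ennreal In = ennreal (r t0 * In)"
    using r_nonneg[of t0] by (simp add: ennreal_mult')
  hence Ynf: "?Yn \<noteq> \<infinity>"
    using Yn_le by (auto simp: top_unique)
  have "?Yn + ?X1 \<le> ?Yn + ?X2"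
  proof -
    have "?Yn + ?X1 \<le> ?Yp + ?X1" using YnYp by (rule add_right_mono)
    also have "\<dots> = ?Yn + ?X2" using sum by (simp add: add.commute)
    finally show ?thesis .
  qed
  thus ?thesis using Ynf by (simp add: ennreal_add_left_cancel_le)
qed

end


theorem lemma5:
  fixes F f :: "real \<Rightarrow> real" and lam c :: real
  assumes f_nonneg: "\<And>x. 0 \<le> f x"
    and f_neg: "\<And>x. x < 0 \<Longrightarrow> f x = 0"
    and F_density: "\<And>x. (f has_integral F x) {..x}"
    and F_cont: "continuous_on UNIV F"
    and F_lim: "(F \<longlongrightarrow> 1) at_top"
    and f_support: "closure {x. f x \<noteq> 0} = {0..}"
    and f_bdd0: "\<exists>e>0. \<exists>B. \<forall>x. \<bar>x\<bar> < e \<longrightarrow> \<bar>f x\<bar> \<le> B"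
    and f_diff: "\<And>x. 0 < x \<Longrightarrow> f differentiable (at x)"
    and f_cond: "\<And>x. 0 < x \<Longrightarrow> x < 1 \<Longrightarrow>
                   deriv f (Finv F x) \<le> - f (Finv F x) / (1 + Finv F x)"
    and lam: "0 < lam" "lam \<le> 2"
    and c: "0 \<le> c"
  shows "mono_on {max 0 (lam - 1) .. lam / 2} (Psi F f lam c)"
proof -
  interpret dens F f
    by (rule dens.intro[OF f_nonneg f_neg F_density F_cont F_lim f_support f_diff f_cond])
  show ?thesis
  proof (rule mono_onI)
    fix r s assume r: "r \<in> {max 0 (lam - 1) .. lam / 2}" and s: "s \<in> {max 0 (lam - 1) .. lam / 2}"
      and rs: "r \<le> s"
    have "(\<integral>\<^sup>+t. ennreal (wt c t * (1 - phi (1-lam+r) (1-r) (F t))) \<partial>lborel) \<le>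
          (\<integral>\<^sup>+t. ennreal (wt c t * (1 - phi (1-lam+s) (1-s) (F t))) \<partial>lborel)"
      using r s rs lam by (intro compare c) auto
    thus "Psi F f lam c r \<le> Psi F f lam c s"
      using Psi_formula[OF lam c] r s by (simp add: add_left_mono)
  qed
qed

end
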